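(* (Working in $\mathbf{ZFC}$.) Let $X$ be an infinite set of cardinality $\kappa$. Then there are exactly $2^{2^{\kappa}}$ weakly normal small generalized topologies in $X$ that induce the discrete topology of $X$.
   Context: A generalized topology in a set $X$ is a collection $\mathrm{Cov}$ of families of subsets of $X$ such that, with $\mathrm{Op}=\bigcup\mathrm{Cov}$, the triple $(X,\mathrm{Op},\mathrm{Cov})$ is a generalized topological space in the sense of Delfs–Knebusch ($\mathrm{Op}$ contains $\emptyset,X$ and is closed under finite unions and intersections; $\mathrm{Cov}$ satisfies the Delfs–Knebusch axioms for admissible coverings). It induces the topology generated by $\mathrm{Op}$. It is small if $\mathrm{Cov}$ is exactly the set of essentially finite subfamilies of $\mathrm{Op}$ (a family is essentially finite if some finite subfamily has the same union). It is weakly normal if for any two disjoint subsets $A_1,A_2$ of $X$, each a singleton or the complement of a member of $\mathrm{Op}$, there are disjoint $W_1,W_2\in\mathrm{Op}$ with $A_i\subseteq W_i$. *)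

theory Defs
  imports "HOL-Analysis.Analysis" "HOL-Library.Equipollence"
begin

definition gt_Op :: "'a set set set \<Rightarrow> 'a set set" where
  "gt_Op Cov = \<Union>Cov"

definition fam_inter :: "'a set set \<Rightarrow> 'a set \<Rightarrow> 'a set set" where
  "fam_inter \<U> V = (\<lambda>U. U \<inter> V) ` \<U>"

text \<open>Generalized topological space (Delfs--Knebusch axioms, in the set-family
  formulation): X with open sets Op and admissible coverings Cov.\<close>
definition gts :: "'a set \<Rightarrow> 'a set set \<Rightarrow> 'a set set set \<Rightarrow> bool" where
  "gts X Op Cov \<longleftrightarrow>
     Op \<subseteq> Pow X \<and> Cov \<subseteq> Pow Op \<and>
     {} \<in> Op \<and> X \<in> Op \<and>
     (\<forall>U\<in>Op. \<forall>V\<in>Op. U \<union> V \<in> Op \<and> U \<inter> V \<in> Op) \<and>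
     (\<forall>\<U>. \<U> \<subseteq> Op \<and> finite \<U> \<longrightarrow> \<U> \<in> Cov) \<and>
     (\<forall>\<U>\<in>Cov. \<Union>\<U> \<in> Op) \<and>
     (\<forall>\<U>\<in>Cov. \<forall>V\<in>Op. V \<subseteq> \<Union>\<U> \<longrightarrow> fam_inter \<U> V \<in> Cov) \<and>
     (\<forall>\<U>\<in>Cov. \<forall>f. (\<forall>U\<in>\<U>. f U \<in> Cov \<and> \<Union>(f U) = U) \<longrightarrow> (\<Union>U\<in>\<U>. f U) \<in> Cov) \<and>
     (\<forall>\<U>\<in>Cov. \<forall>\<V>. \<V> \<subseteq> Op \<and> \<Union>\<V> = \<Union>\<U> \<and> (\<forall>U\<in>\<U>. \<exists>V\<in>\<V>. U \<subseteq> V)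
         \<longrightarrow> \<V> \<in> Cov) \<and>
     (\<forall>\<U> \<V>. \<U> \<subseteq> Op \<and> \<V> \<in> Cov \<and> \<Union>\<V> = \<Union>\<U> \<and> (\<forall>V\<in>\<V>. fam_inter \<U> V \<in> Cov)
         \<longrightarrow> \<U> \<in> Cov)"

definition generalized_topology :: "'a set \<Rightarrow> 'a set set set \<Rightarrow> bool" where
  "generalized_topology X Cov \<longleftrightarrow> gts X (gt_Op Cov) Cov"

definition essentially_finite :: "'a set set \<Rightarrow> bool" where
  "essentially_finite \<U> \<longleftrightarrow> (\<exists>\<F>\<subseteq>\<U>. finite \<F> \<and> \<Union>\<F> = \<Union>\<U>)"

definition small_gt :: "'a set set set \<Rightarrow> bool" where
  "small_gt Cov \<longleftrightarrow> Cov = {\<U>. \<U> \<subseteq> gt_Op Cov \<and> essentially_finite \<U>}"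

definition weakly_normal_gt :: "'a set \<Rightarrow> 'a set set set \<Rightarrow> bool" where
  "weakly_normal_gt X Cov \<longleftrightarrow>
     (\<forall>A1 A2. (\<exists>x\<in>X. A1 = {x}) \<or> (\<exists>U\<in>gt_Op Cov. A1 = X - U) \<longrightarrow>
              (\<exists>x\<in>X. A2 = {x}) \<or> (\<exists>U\<in>gt_Op Cov. A2 = X - U) \<longrightarrow>
              A1 \<inter> A2 = {} \<longrightarrow>
              (\<exists>W1\<in>gt_Op Cov. \<exists>W2\<in>gt_Op Cov. W1 \<inter> W2 = {} \<and> A1 \<subseteq> W1 \<and> A2 \<subseteq> W2))"

definition induced_topology :: "'a set set set \<Rightarrow> 'a topology" where
  "induced_topology Cov = topology_generated_by (gt_Op Cov)"

end

theory Submission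
  imports Defs
begin

unbundle cardinal_syntax

lemma fin_union_in:
  assumes "finite F" "F \<subseteq> Op" "{} \<in> Op" "\<forall>U\<in>Op. \<forall>V\<in>Op. U \<union> V \<in> Op \<and> U \<inter> V \<in> Op"
  shows "\<Union>F \<in> Op"
  using assms by (induction F rule: finite_induct) auto

lemma ef_D:
  assumes "essentially_finite \<U>"
  obtains F where "F \<subseteq> \<U>" "finite F" "\<Union>F = \<Union>\<U>"
  using assms unfolding essentially_finite_def by auto

lemma ef_I:
  assumes "F \<subseteq> \<U>" "finite F" "\<Union>F = \<Union>\<U>"
  shows "essentially_finite \<U>"
  unfolding essentially_finite_def using assms by (intro exI[of _ F]) simp

lemma small_gts:
  assumes sub: "Op \<subseteq> Pow X" and e: "{} \<in> Op" and x: "X \<in> Op"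
    and cl: "\<forall>U\<in>Op. \<forall>V\<in>Op. U \<union> V \<in> Op \<and> U \<inter> V \<in> Op"
  defines "Cov \<equiv> {\<U>. \<U> \<subseteq> Op \<and> essentially_finite \<U>}"
  shows "gt_Op Cov = Op" "generalized_topology X Cov" "small_gt Cov"
proof -
  have CovI: "\<U> \<in> Cov \<longleftrightarrow> \<U> \<subseteq> Op \<and> essentially_finite \<U>" for \<U>
    unfolding Cov_def by simp
  show op: "gt_Op Cov = Op"
  proof
    show "gt_Op Cov \<subseteq> Op" unfolding gt_Op_def Cov_def by auto
    show "Op \<subseteq> gt_Op Cov"
    proof
      fix U assume "U \<in> Op"
      then have "{U} \<in> Cov" unfolding CovI using ef_I[of "{U}" "{U}"] by simp
      then show "U \<in> gt_Op Cov" unfolding gt_Op_def by auto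
    qed
  qed
  show "small_gt Cov" unfolding small_gt_def op by (simp add: Cov_def)
  have h2: "Cov \<subseteq> Pow Op" unfolding Cov_def by auto
  have h6: "\<forall>\<U>. \<U> \<subseteq> Op \<and> finite \<U> \<longrightarrow> \<U> \<in> Cov"
  proof (intro allI impI)
    fix \<U> :: "'a set set" assume "\<U> \<subseteq> Op \<and> finite \<U>"
    then show "\<U> \<in> Cov" unfolding CovI using ef_I[of \<U> \<U>] by simp
  qed
  have h7: "\<forall>\<U>\<in>Cov. \<Union>\<U> \<in> Op"
  proof
    fix \<U> assume U: "\<U> \<in> Cov"
    then have UO: "\<U> \<subseteq> Op" and "essentially_finite \<U>" unfolding CovI by auto
    obtain F where F: "F \<subseteq> \<U>" "finite F" "\<Union>F = \<Union>\<U>" using \<open>essentially_finite \<U>\<close> by (rule ef_D)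
    have "F \<subseteq> Op" using F(1) UO by (rule subset_trans)
    then have "\<Union>F \<in> Op" using fin_union_in[of F Op] F(2) e cl by simp
    then show "\<Union>\<U> \<in> Op" using F(3) by simp
  qed
  have h8: "\<forall>\<U>\<in>Cov. \<forall>V\<in>Op. V \<subseteq> \<Union>\<U> \<longrightarrow> fam_inter \<U> V \<in> Cov"
  proof (intro ballI impI)
    fix \<U> V assume U: "\<U> \<in> Cov" and V: "V \<in> Op"
    then have UO: "\<U> \<subseteq> Op" and "essentially_finite \<U>" unfolding CovI by auto
    obtain F where F: "F \<subseteq> \<U>" "finite F" "\<Union>F = \<Union>\<U>" using \<open>essentially_finite \<U>\<close> by (rule ef_D)
    have a: "fam_inter F V \<subseteq> fam_inter \<U> V" using F(1) unfolding fam_inter_def by auto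
    have b: "finite (fam_inter F V)" using F(2) unfolding fam_inter_def by simp
    have c: "\<Union>(fam_inter F V) = \<Union>(fam_inter \<U> V)"
    proof -
      have "\<Union>(fam_inter F V) = \<Union>F \<inter> V" unfolding fam_inter_def by auto
      also have "\<dots> = \<Union>\<U> \<inter> V" using F(3) by simp
      also have "\<dots> = \<Union>(fam_inter \<U> V)" unfolding fam_inter_def by auto
      finally show ?thesis .
    qed
    have "fam_inter \<U> V \<subseteq> Op"
    proof
      fix W assume "W \<in> fam_inter \<U> V"
      then obtain U where "U \<in> \<U>" "W = U \<inter> V" unfolding fam_inter_def by auto
      then show "W \<in> Op" using UO V cl by auto
    qed
    then show "fam_inter \<U> V \<in> Cov" unfolding CovI using ef_I[OF a b c] by simp
  qed
  have h9: "\<forall>\<U>\<in>Cov. \<forall>f. (\<forall>U\<in>\<U>. f U \<in> Cov \<and> \<Union>(f U) = U) \<longrightarrow> (\<Union>U\<in>\<U>. f U) \<in> Cov"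
  proof (intro ballI allI impI)
    fix \<U> f assume U: "\<U> \<in> Cov" and f: "\<forall>U\<in>\<U>. f U \<in> Cov \<and> \<Union>(f U) = U"
    then have UO: "\<U> \<subseteq> Op" and "essentially_finite \<U>" unfolding CovI by auto
    obtain F where F: "F \<subseteq> \<U>" "finite F" "\<Union>F = \<Union>\<U>" using \<open>essentially_finite \<U>\<close> by (rule ef_D)
    have "\<exists>G. G \<subseteq> f U \<and> finite G \<and> \<Union>G = U" if "U \<in> F" for U
    proof -
      have "U \<in> \<U>" using that F(1) by auto
      then have "essentially_finite (f U)" "\<Union>(f U) = U" using f unfolding CovI by auto
      then obtain G where "G \<subseteq> f U" "finite G" "\<Union>G = \<Union>(f U)" by (elim ef_D)
      then show ?thesis using \<open>\<Union>(f U) = U\<close> by auto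
    qed
    then obtain G where G: "\<And>U. U\<in>F \<Longrightarrow> G U \<subseteq> f U \<and> finite (G U) \<and> \<Union>(G U) = U" by metis
    have a: "(\<Union>U\<in>\<U>. f U) \<subseteq> Op"
    proof
      fix W assume "W \<in> (\<Union>U\<in>\<U>. f U)"
      then obtain U where "U \<in> \<U>" "W \<in> f U" by auto
      then show "W \<in> Op" using f unfolding CovI by auto
    qed
    have b: "(\<Union>U\<in>F. G U) \<subseteq> (\<Union>U\<in>\<U>. f U)" using G F(1) by fastforce
    have c: "finite (\<Union>U\<in>F. G U)" using G F(2) by auto
    have d1: "\<Union>(\<Union>U\<in>F. G U) = \<Union>F"
    proof -
      have "\<Union>(\<Union>U\<in>F. G U) = (\<Union>U\<in>F. \<Union>(G U))" by auto
      also have "\<dots> = (\<Union>U\<in>F. U)" using G by simp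
      finally show ?thesis by simp
    qed
    have d2: "\<Union>(\<Union>U\<in>\<U>. f U) = \<Union>\<U>"
    proof -
      have "\<Union>(\<Union>U\<in>\<U>. f U) = (\<Union>U\<in>\<U>. \<Union>(f U))" by auto
      also have "\<dots> = (\<Union>U\<in>\<U>. U)" using f by simp
      finally show ?thesis by simp
    qed
    have "\<Union>(\<Union>U\<in>F. G U) = \<Union>(\<Union>U\<in>\<U>. f U)" using d1 d2 F(3) by simp
    then show "(\<Union>U\<in>\<U>. f U) \<in> Cov" unfolding CovI using a ef_I[OF b c] by simp
  qed
  have h10: "\<forall>\<U>\<in>Cov. \<forall>\<V>. \<V> \<subseteq> Op \<and> \<Union>\<V> = \<Union>\<U> \<and> (\<forall>U\<in>\<U>. \<exists>V\<in>\<V>. U \<subseteq> V)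
         \<longrightarrow> \<V> \<in> Cov"
  proof (intro ballI allI impI)
    fix \<U> \<V> assume U: "\<U> \<in> Cov" and V: "\<V> \<subseteq> Op \<and> \<Union>\<V> = \<Union>\<U> \<and> (\<forall>U\<in>\<U>. \<exists>V\<in>\<V>. U \<subseteq> V)"
    then have "essentially_finite \<U>" unfolding CovI by auto
    obtain F where F: "F \<subseteq> \<U>" "finite F" "\<Union>F = \<Union>\<U>" using \<open>essentially_finite \<U>\<close> by (rule ef_D)
    have "\<forall>U\<in>\<U>. \<exists>V\<in>\<V>. U \<subseteq> V" using V by simp
    then obtain c where c: "\<And>U. U \<in> \<U> \<Longrightarrow> c U \<in> \<V> \<and> U \<subseteq> c U" by metis
    have a: "c ` F \<subseteq> \<V>" using c F(1) by auto
    have b: "finite (c ` F)" using F(2) by auto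
    have s1: "\<Union>(c ` F) \<subseteq> \<Union>\<V>" using a by auto
    have s2: "\<Union>\<V> \<subseteq> \<Union>(c ` F)"
    proof
      fix x assume "x \<in> \<Union>\<V>"
      then have "x \<in> \<Union>F" using V F(3) by simp
      then obtain U where "U \<in> F" "x \<in> U" by auto
      then have "x \<in> c U" "c U \<in> c ` F" using c F(1) by auto
      then show "x \<in> \<Union>(c ` F)" by auto
    qed
    have "\<Union>(c ` F) = \<Union>\<V>" using s1 s2 by (rule equalityI)
    then show "\<V> \<in> Cov" unfolding CovI using V ef_I[OF a b] by simp
  qed
  have h11: "\<forall>\<U> \<V>. \<U> \<subseteq> Op \<and> \<V> \<in> Cov \<and> \<Union>\<V> = \<Union>\<U> \<and> (\<forall>V\<in>\<V>. fam_inter \<U> V \<in> Cov)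
         \<longrightarrow> \<U> \<in> Cov"
  proof (intro allI impI)
    fix \<U> \<V> assume A: "\<U> \<subseteq> Op \<and> \<V> \<in> Cov \<and> \<Union>\<V> = \<Union>\<U> \<and> (\<forall>V\<in>\<V>. fam_inter \<U> V \<in> Cov)"
    then have "essentially_finite \<V>" unfolding CovI by auto
    obtain F where F: "F \<subseteq> \<V>" "finite F" "\<Union>F = \<Union>\<V>" using \<open>essentially_finite \<V>\<close> by (rule ef_D)
    have "\<exists>H. H \<subseteq> \<U> \<and> finite H \<and> V \<subseteq> \<Union>H" if VF: "V \<in> F" for V
    proof -
      have VV: "V \<in> \<V>" using VF F(1) by auto
      then have "fam_inter \<U> V \<in> Cov" using A by simp
      then have "essentially_finite ((\<lambda>U. U \<inter> V) ` \<U>)" unfolding CovI fam_inter_def by simp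
      then obtain G where G: "G \<subseteq> (\<lambda>U. U \<inter> V) ` \<U>" "finite G" "\<Union>G = \<Union>((\<lambda>U. U \<inter> V) ` \<U>)"
        by (rule ef_D)
      obtain H where H: "H \<subseteq> \<U>" "finite H" "G = (\<lambda>U. U \<inter> V) ` H"
        using finite_subset_image[OF G(2) G(1)] by auto
      have VU: "V \<subseteq> \<Union>\<U>" using VV A by auto
      have "V \<subseteq> \<Union>H"
      proof
        fix x assume "x \<in> V"
        then have "x \<in> \<Union>((\<lambda>U. U \<inter> V) ` \<U>)" using VU by auto
        then have "x \<in> \<Union>G" using G(3) by simp
        then show "x \<in> \<Union>H" using H(3) by auto
      qed
      then show ?thesis using H(1,2) by auto
    qed
    then obtain H where H: "\<And>V. V \<in> F \<Longrightarrow> H V \<subseteq> \<U> \<and> finite (H V) \<and> V \<subseteq> \<Union>(H V)" by metis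
    have s1: "(\<Union>V\<in>F. H V) \<subseteq> \<U>" using H by auto
    have s2: "finite (\<Union>V\<in>F. H V)" using H F(2) by auto
    have s3: "\<Union>\<U> \<subseteq> \<Union>(\<Union>V\<in>F. H V)"
    proof
      fix x assume "x \<in> \<Union>\<U>"
      then have "x \<in> \<Union>F" using A F(3) by simp
      then obtain V where "V \<in> F" "x \<in> V" by auto
      then have "x \<in> \<Union>(H V)" "H V \<subseteq> (\<Union>V\<in>F. H V)" using H[of V] by blast+
      then show "x \<in> \<Union>(\<Union>V\<in>F. H V)" by auto
    qed
    have s4: "\<Union>(\<Union>V\<in>F. H V) \<subseteq> \<Union>\<U>" using s1 by auto
    have "\<Union>(\<Union>V\<in>F. H V) = \<Union>\<U>" using s4 s3 by (rule equalityI)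
    then show "\<U> \<in> Cov" unfolding CovI using A ef_I[OF s1 s2] by simp
  qed
  show "generalized_topology X Cov" unfolding generalized_topology_def gts_def op
    by (intro conjI; (fact sub h2 e x cl h6 h7 h8 h9 h10 h11)?)
qed

lemma discrete_gen:
  assumes "Op \<subseteq> Pow X" "X \<in> Op" "\<forall>x\<in>X. {x} \<in> Op"
  shows "topology_generated_by Op = discrete_topology X"
  unfolding topology_eq
proof (intro allI iffI)
  fix S assume "openin (topology_generated_by Op) S"
  then have "S \<subseteq> \<Union>Op" using openin_subset by fastforce
  then show "openin (discrete_topology X) S" using assms by auto
next
  fix S assume "openin (discrete_topology X) S"
  then have "S \<subseteq> X" by simp
  then have "S = \<Union>((\<lambda>x. {x}) ` S)" "\<forall>k\<in>(\<lambda>x. {x}) ` S. generate_topology_on Op k"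
    using assms by (auto intro: generate_topology_on.Basis)
  then have "generate_topology_on Op S" by (metis generate_topology_on.UN)
  then show "openin (topology_generated_by Op) S" by (simp add: openin_topology_generated_by_iff)
qed


lemma lepoll_iff_ordLeq: "A \<lesssim> B \<longleftrightarrow> |A| \<le>o |B|"
  unfolding lepoll_def card_of_ordLeq ..

lemma times_self_lepoll: "infinite X \<Longrightarrow> X \<times> X \<lesssim> X"
proof -
  assume "infinite X"
  then have "|X \<times> X| =o |X|" by (rule card_of_Times_same_infinite)
  then have "X \<times> X \<approx> X" by (simp add: eqpoll_iff_card_of_ordIso)
  then show ?thesis by (rule eqpoll_imp_lepoll)
qed

lemma hdtl_inj: "(xs::'a list) \<noteq> [] \<Longrightarrow> ys \<noteq> [] \<Longrightarrow> (hd xs, tl xs) = (hd ys, tl ys) \<Longrightarrow> xs = ys"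
  by (metis list.collapse prod.inject)

lemma hdtl_set: "(xs::'a list) \<noteq> [] \<Longrightarrow> set xs \<subseteq> X \<Longrightarrow> hd xs \<in> X \<and> set (tl xs) \<subseteq> X"
  by (meson hd_in_set list.set_sel(2) subset_iff)

lemma nlists_step:
  "{xs. set xs \<subseteq> X \<and> length xs = Suc n} \<lesssim> X \<times> {xs. set xs \<subseteq> X \<and> length xs = n}"
  unfolding lepoll_def
proof (intro exI[of _ "\<lambda>xs. (hd xs, tl xs)"] conjI)
  show "inj_on (\<lambda>xs. (hd xs, tl xs)) {xs. set xs \<subseteq> X \<and> length xs = Suc n}"
  proof (rule inj_onI)
    fix xs ys assume a: "xs \<in> {xs. set xs \<subseteq> X \<and> length xs = Suc n}"
      "ys \<in> {xs. set xs \<subseteq> X \<and> length xs = Suc n}" "(hd xs, tl xs) = (hd ys, tl ys)"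
    then have "xs \<noteq> []" "ys \<noteq> []" by auto
    then show "xs = ys" using a(3) by (rule hdtl_inj)
  qed
  show "(\<lambda>xs. (hd xs, tl xs)) ` {xs. set xs \<subseteq> X \<and> length xs = Suc n}
      \<subseteq> X \<times> {xs. set xs \<subseteq> X \<and> length xs = n}"
  proof
    fix p assume "p \<in> (\<lambda>xs. (hd xs, tl xs)) ` {xs. set xs \<subseteq> X \<and> length xs = Suc n}"
    then obtain xs where xs: "set xs \<subseteq> X" "length xs = Suc n" "p = (hd xs, tl xs)" by auto
    then have "xs \<noteq> []" by auto
    then have "hd xs \<in> X \<and> set (tl xs) \<subseteq> X" using xs(1) by (rule hdtl_set)
    then show "p \<in> X \<times> {xs. set xs \<subseteq> X \<and> length xs = n}" using xs by simp
  qed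
qed

lemma nlists_lepoll:
  assumes "infinite X"
  shows "{xs. set xs \<subseteq> X \<and> length xs = n} \<lesssim> X"
proof (induction n)
  case 0
  have e: "{xs. set xs \<subseteq> X \<and> length xs = 0} = {[]}" by auto
  obtain x where x: "x \<in> X" using assms by (metis finite.emptyI equals0I)
  have "{[]} \<lesssim> X" unfolding lepoll_def using x by (intro exI[of _ "\<lambda>_. x"]) simp
  then show ?case unfolding e .
next
  case (Suc n)
  have "{xs. set xs \<subseteq> X \<and> length xs = Suc n} \<lesssim> X \<times> {xs. set xs \<subseteq> X \<and> length xs = n}"
    by (rule nlists_step)
  also have "\<dots> \<lesssim> X \<times> X" by (rule times_lepoll_mono[OF lepoll_refl Suc.IH])
  also have "\<dots> \<lesssim> X" by (rule times_self_lepoll[OF assms])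
  finally show ?case .
qed

lemma lists_lepoll_inf:
  assumes "infinite X"
  shows "lists X \<lesssim> X"
proof -
  have eq: "lists X = (\<Union>n\<in>UNIV. {xs. set xs \<subseteq> X \<and> length xs = n})" by auto
  have "|\<Union>n\<in>UNIV. {xs. set xs \<subseteq> X \<and> length xs = n}| \<le>o |X|"
  proof (rule card_of_UNION_ordLeq_infinite)
    show "infinite X" by (rule assms)
    show "|UNIV :: nat set| \<le>o |X|" using assms infinite_iff_card_of_nat[of X] by simp
    show "\<forall>n\<in>UNIV. |{xs. set xs \<subseteq> X \<and> length xs = n}| \<le>o |X|"
      using nlists_lepoll[OF assms] by (simp add: lepoll_iff_ordLeq)
  qed
  then show ?thesis unfolding lepoll_iff_ordLeq eq .
qed

lemma some_list_set: "finite F \<Longrightarrow> set (SOME xs. set xs = F) = F"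
proof -
  assume "finite F"
  then have "\<exists>xs. set xs = F" by (rule finite_list)
  then show ?thesis by (rule someI_ex)
qed

lemma fpow_lepoll_lists: "{F. finite F \<and> F \<subseteq> A} \<lesssim> lists A"
  unfolding lepoll_def
proof (intro exI[of _ "\<lambda>F. SOME xs. set xs = F"] conjI)
  show "inj_on (\<lambda>F. SOME xs. set xs = F) {F. finite F \<and> F \<subseteq> A}"
  proof (rule inj_onI)
    fix F G assume a: "F \<in> {F. finite F \<and> F \<subseteq> A}" "G \<in> {F. finite F \<and> F \<subseteq> A}"
      and eq: "(SOME xs. set xs = F) = (SOME xs. set xs = G)"
    from a have fF: "finite F" "finite G" by auto
    have "F = set (SOME xs. set xs = F)" using some_list_set[OF fF(1)] by (rule sym)
    also have "\<dots> = set (SOME xs. set xs = G)" using eq by (rule arg_cong)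
    also have "\<dots> = G" by (rule some_list_set[OF fF(2)])
    finally show "F = G" .
  qed
  show "(\<lambda>F. SOME xs. set xs = F) ` {F. finite F \<and> F \<subseteq> A} \<subseteq> lists A"
  proof
    fix xs assume "xs \<in> (\<lambda>F. SOME xs. set xs = F) ` {F. finite F \<and> F \<subseteq> A}"
    then obtain F where F: "finite F" "F \<subseteq> A" "xs = (SOME xs. set xs = F)" by auto
    then have "set xs = F" using some_list_set[OF F(1)] by simp
    then show "xs \<in> lists A" using F(2) by auto
  qed
qed

lemma fpow_lepoll: "infinite X \<Longrightarrow> A \<lesssim> X \<Longrightarrow> {F. finite F \<and> F \<subseteq> A} \<lesssim> X"
  using lepoll_trans[OF fpow_lepoll_lists lepoll_trans[OF lists_lepoll_mono lists_lepoll_inf]] by blast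

definition YY :: "'a set \<Rightarrow> ('a set \<times> 'a set set) set" where
  "YY X = {(F, \<F>). finite F \<and> F \<subseteq> X \<and> \<F> \<subseteq> Pow F}"

lemma YY_lepoll:
  assumes "infinite X"
  shows "YY X \<lesssim> X"
proof -
  let ?FX = "{F. finite F \<and> F \<subseteq> X}"
  have 1: "?FX \<lesssim> X" using fpow_lepoll[OF assms lepoll_refl] .
  have 2: "{\<F>. finite \<F> \<and> \<F> \<subseteq> ?FX} \<lesssim> X" using fpow_lepoll[OF assms 1] .
  have "YY X \<subseteq> ?FX \<times> {\<F>. finite \<F> \<and> \<F> \<subseteq> ?FX}"
  proof
    fix y assume "y \<in> YY X"
    then obtain F \<F> where y: "y = (F, \<F>)" "finite F" "F \<subseteq> X" "\<F> \<subseteq> Pow F" unfolding YY_def by auto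
    then have "finite \<F>" using finite_Pow_iff finite_subset by metis
    moreover have "\<F> \<subseteq> ?FX" using y by (auto intro: finite_subset)
    ultimately show "y \<in> ?FX \<times> {\<F>. finite \<F> \<and> \<F> \<subseteq> ?FX}" using y by auto
  qed
  then have "YY X \<lesssim> ?FX \<times> {\<F>. finite \<F> \<and> \<F> \<subseteq> ?FX}" by (rule subset_imp_lepoll)
  also have "\<dots> \<lesssim> X \<times> X" by (rule times_lepoll_mono[OF 1 2])
  also have "\<dots> \<lesssim> X" by (rule times_self_lepoll[OF assms])
  finally show ?thesis .
qed


definition memb :: "'a set \<Rightarrow> 'a set \<times> 'a set set \<Rightarrow> bool" where
  "memb A y \<longleftrightarrow> A \<inter> fst y \<in> snd y"

definition detd :: "'a set \<Rightarrow> ('a set \<times> 'a set set \<Rightarrow> 'a) \<Rightarrow> 'a set set \<Rightarrow>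
    ('a set \<times> 'a set set) set \<Rightarrow> 'a set \<Rightarrow> bool" where
  "detd X h T E C \<longleftrightarrow> (\<forall>y\<in>YY X. \<forall>y'\<in>YY X. y \<notin> E \<longrightarrow> y' \<notin> E \<longrightarrow>
      (\<forall>A\<in>T. memb A y = memb A y') \<longrightarrow> (h y \<in> C \<longleftrightarrow> h y' \<in> C))"

definition OpS :: "'a set \<Rightarrow> ('a set \<times> 'a set set \<Rightarrow> 'a) \<Rightarrow> 'a set set \<Rightarrow> 'a set set" where
  "OpS X h \<S> = {C. C \<subseteq> X \<and> (\<exists>T E. finite T \<and> T \<subseteq> \<S> \<and> finite E \<and> detd X h T E C)}"

definition DD :: "'a set \<Rightarrow> ('a set \<times> 'a set set \<Rightarrow> 'a) \<Rightarrow> 'a set \<Rightarrow> 'a set" where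
  "DD X h A = h ` {y \<in> YY X. memb A y}"

lemma detdD:
  assumes "detd X h T E C" "y \<in> YY X" "y' \<in> YY X" "y \<notin> E" "y' \<notin> E" "\<forall>A\<in>T. memb A y = memb A y'"
  shows "h y \<in> C \<longleftrightarrow> h y' \<in> C"
proof -
  have "\<forall>y\<in>YY X. \<forall>y'\<in>YY X. y \<notin> E \<longrightarrow> y' \<notin> E \<longrightarrow>
      (\<forall>A\<in>T. memb A y = memb A y') \<longrightarrow> (h y \<in> C \<longleftrightarrow> h y' \<in> C)"
    using assms(1) unfolding detd_def .
  then show ?thesis using assms(2-6) by blast
qed

lemma OpS_D:
  assumes "C \<in> OpS X h \<S>"
  obtains T E where "C \<subseteq> X" "finite T" "T \<subseteq> \<S>" "finite E" "detd X h T E C"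
  using assms unfolding OpS_def by auto

lemma OpS_I:
  assumes "C \<subseteq> X" "finite T" "T \<subseteq> \<S>" "finite E" "detd X h T E C"
  shows "C \<in> OpS X h \<S>"
  using assms unfolding OpS_def by auto

lemma OpS_Un_Int:
  assumes "C1 \<in> OpS X h \<S>" "C2 \<in> OpS X h \<S>"
  shows "C1 \<union> C2 \<in> OpS X h \<S> \<and> C1 \<inter> C2 \<in> OpS X h \<S>"
proof -
  obtain T1 E1 where 1: "C1 \<subseteq> X" "finite T1" "T1 \<subseteq> \<S>" "finite E1" "detd X h T1 E1 C1"
    using assms(1) by (rule OpS_D)
  obtain T2 E2 where 2: "C2 \<subseteq> X" "finite T2" "T2 \<subseteq> \<S>" "finite E2" "detd X h T2 E2 C2"
    using assms(2) by (rule OpS_D)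
  have d: "(h y \<in> C1 \<longleftrightarrow> h y' \<in> C1) \<and> (h y \<in> C2 \<longleftrightarrow> h y' \<in> C2)"
    if "y \<in> YY X" "y' \<in> YY X" "y \<notin> E1 \<union> E2" "y' \<notin> E1 \<union> E2" "\<forall>A\<in>T1 \<union> T2. memb A y = memb A y'" for y y'
  proof -
    have a: "h y \<in> C1 \<longleftrightarrow> h y' \<in> C1" by (rule detdD[OF 1(5) that(1,2)]) (use that in auto)
    have b: "h y \<in> C2 \<longleftrightarrow> h y' \<in> C2" by (rule detdD[OF 2(5) that(1,2)]) (use that in auto)
    show ?thesis using a b by (rule conjI)
  qed
  have "detd X h (T1 \<union> T2) (E1 \<union> E2) (C1 \<union> C2)" unfolding detd_def
  proof (intro ballI impI)
    fix y y' assume yy: "y \<in> YY X" "y' \<in> YY X" "y \<notin> E1 \<union> E2" "y' \<notin> E1 \<union> E2"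
      "\<forall>A\<in>T1 \<union> T2. memb A y = memb A y'"
    from d[OF yy] show "h y \<in> C1 \<union> C2 \<longleftrightarrow> h y' \<in> C1 \<union> C2" by blast
  qed
  moreover have "detd X h (T1 \<union> T2) (E1 \<union> E2) (C1 \<inter> C2)" unfolding detd_def
  proof (intro ballI impI)
    fix y y' assume yy: "y \<in> YY X" "y' \<in> YY X" "y \<notin> E1 \<union> E2" "y' \<notin> E1 \<union> E2"
      "\<forall>A\<in>T1 \<union> T2. memb A y = memb A y'"
    from d[OF yy] show "h y \<in> C1 \<inter> C2 \<longleftrightarrow> h y' \<in> C1 \<inter> C2" by blast
  qed
  moreover have "finite (T1 \<union> T2)" "T1 \<union> T2 \<subseteq> \<S>" "finite (E1 \<union> E2)"
    using 1 2 by auto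
  moreover have "C1 \<union> C2 \<subseteq> X" "C1 \<inter> C2 \<subseteq> X" using 1 2 by auto
  ultimately show ?thesis using OpS_I by metis
qed

lemma OpS_compl:
  assumes "C \<in> OpS X h \<S>" "h ` YY X \<subseteq> X"
  shows "X - C \<in> OpS X h \<S>"
proof -
  obtain T E where 1: "C \<subseteq> X" "finite T" "T \<subseteq> \<S>" "finite E" "detd X h T E C"
    using assms(1) by (rule OpS_D)
  have "detd X h T E (X - C)" unfolding detd_def
  proof (intro ballI impI)
    fix y y' assume yy: "y \<in> YY X" "y' \<in> YY X" "y \<notin> E" "y' \<notin> E" "\<forall>A\<in>T. memb A y = memb A y'"
    have "h y \<in> C \<longleftrightarrow> h y' \<in> C" using detdD[OF 1(5) yy] .
    moreover have "h y \<in> X" "h y' \<in> X" using yy(1,2) assms(2) by auto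
    ultimately show "h y \<in> X - C \<longleftrightarrow> h y' \<in> X - C" by auto
  qed
  then show ?thesis using 1 by (intro OpS_I[of _ _ T _ E]) auto
qed

lemma OpS_empty: "{} \<in> OpS X h \<S>"
  unfolding OpS_def detd_def by (intro CollectI conjI exI[of _ "{}"]) auto

lemma OpS_X: "h ` YY X \<subseteq> X \<Longrightarrow> X \<in> OpS X h \<S>"
  unfolding OpS_def detd_def by (intro CollectI conjI exI[of _ "{}"]) auto

lemma OpS_single:
  assumes "inj_on h (YY X)"
  shows "x \<in> X \<Longrightarrow> {x} \<in> OpS X h \<S>"
proof -
  assume x: "x \<in> X"
  have fin: "finite (h -` {x} \<inter> YY X)" using finite_vimage_IntI[OF _ assms] by simp
  have "detd X h {} (h -` {x} \<inter> YY X) {x}" unfolding detd_def by auto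
  moreover have "{x} \<subseteq> X" using x by simp
  ultimately show ?thesis unfolding OpS_def using fin by blast
qed

lemma DD_iff:
  assumes "inj_on h (YY X)" "y \<in> YY X"
  shows "h y \<in> DD X h A \<longleftrightarrow> memb A y"
proof
  assume "h y \<in> DD X h A"
  then obtain y' where "y' \<in> YY X" "memb A y'" "h y = h y'" unfolding DD_def by auto
  then show "memb A y" using assms inj_onD by metis
next
  assume "memb A y" then show "h y \<in> DD X h A" unfolding DD_def using assms(2) by auto
qed

lemma DD_in:
  assumes "inj_on h (YY X)" "h ` YY X \<subseteq> X" "A \<in> \<S>"
  shows "DD X h A \<in> OpS X h \<S>"
proof -
  have "detd X h {A} {} (DD X h A)" unfolding detd_def using DD_iff[OF assms(1)] by simp
  moreover have "DD X h A \<subseteq> X" unfolding DD_def using assms(2) by auto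
  ultimately show ?thesis unfolding OpS_def using assms(3) by (intro CollectI conjI exI[of _ "{A}"]) auto
qed

lemma DD_notin:
  assumes inj: "inj_on h (YY X)" and inf: "infinite X" and BX: "B \<subseteq> X" and BS: "B \<notin> \<S>"
    and SX: "\<S> \<subseteq> Pow X"
  shows "DD X h B \<notin> OpS X h \<S>"
proof
  assume "DD X h B \<in> OpS X h \<S>"
  then obtain T E where TE: "finite T" "T \<subseteq> \<S>" "finite E" "detd X h T E (DD X h B)"
    unfolding OpS_def by blast
  have "\<exists>q. q \<in> (A - B) \<union> (B - A)" if "A \<in> T" for A
  proof -
    have "A \<noteq> B" using that TE(2) BS by auto
    then show ?thesis by blast
  qed
  then obtain p where p: "\<And>A. A \<in> T \<Longrightarrow> p A \<in> (A - B) \<union> (B - A)" by metis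
  define F0 where "F0 = p ` T"
  have F0fin: "finite F0" unfolding F0_def using TE(1) by simp
  have F0X: "F0 \<subseteq> X"
  proof
    fix q assume "q \<in> F0"
    then obtain A where A: "A \<in> T" "q = p A" unfolding F0_def by auto
    then have "A \<subseteq> X" using TE(2) SX by auto
    then show "q \<in> X" using p[OF A(1)] A(2) BX by auto
  qed
  have infD: "infinite (X - F0)" using inf F0fin by (rule Diff_infinite_finite[rotated])
  have injz: "inj_on (\<lambda>z. insert z F0) (X - F0)"
  proof (rule inj_onI)
    fix z z' assume "z \<in> X - F0" "z' \<in> X - F0" "insert z F0 = insert z' F0"
    then show "z = z'" by (metis Diff_iff insertCI insertE)
  qed
  have "infinite ((\<lambda>z. insert z F0) ` (X - F0))"
    using infD finite_imageD[OF _ injz] by blast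
  moreover have "finite (fst ` E)" using TE(3) by simp
  ultimately have "\<not> (\<lambda>z. insert z F0) ` (X - F0) \<subseteq> fst ` E" using finite_subset by blast
  then obtain z where z: "z \<in> X - F0" "insert z F0 \<notin> fst ` E" by auto
  define F where "F = insert z F0"
  define y where "y = (F, insert (B \<inter> F) ((\<lambda>A. A \<inter> F) ` T))"
  define y' where "y' = (F, (\<lambda>A. A \<inter> F) ` T)"
  have Ffin: "finite F" and FX: "F \<subseteq> X" using F0fin F0X z(1) unfolding F_def by auto
  have yY: "y \<in> YY X" unfolding y_def YY_def using Ffin FX by auto
  have y'Y: "y' \<in> YY X" unfolding y'_def YY_def using Ffin FX by auto
  have yE: "y \<notin> E"
  proof
    assume "y \<in> E" then have "fst y \<in> fst ` E" by simp
    then show False using z(2) unfolding y_def F_def by simp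
  qed
  have y'E: "y' \<notin> E"
  proof
    assume "y' \<in> E" then have "fst y' \<in> fst ` E" by simp
    then show False using z(2) unfolding y'_def F_def by simp
  qed
  have pat: "\<forall>A\<in>T. memb A y = memb A y'" unfolding memb_def y_def y'_def by auto
  have "h y \<in> DD X h B \<longleftrightarrow> h y' \<in> DD X h B"
    using TE(4) yY y'Y yE y'E pat by (rule detdD)
  then have eqm: "memb B y \<longleftrightarrow> memb B y'" using DD_iff[OF inj yY] DD_iff[OF inj y'Y] by simp
  have mB: "memb B y" unfolding memb_def y_def by simp
  have "\<not> memb B y'"
  proof
    assume "memb B y'"
    then obtain A where A: "A \<in> T" "B \<inter> F = A \<inter> F" unfolding memb_def y'_def by auto
    have "p A \<in> F" unfolding F_def F0_def using A(1) by auto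
    then show False using p[OF A(1)] A(2) by blast
  qed
  then show False using eqm mB by simp
qed

theorem theorem9p3:
  fixes X :: "'a set"
  assumes "infinite X"
  shows "{Cov. generalized_topology X Cov \<and> small_gt Cov \<and> weakly_normal_gt X Cov
                \<and> induced_topology Cov = discrete_topology X}
         \<approx> Pow (Pow X)"
proof -
  let ?T = "{Cov. generalized_topology X Cov \<and> small_gt Cov \<and> weakly_normal_gt X Cov
                \<and> induced_topology Cov = discrete_topology X}"
  obtain h where inj: "inj_on h (YY X)" and himg: "h ` YY X \<subseteq> X"
    using YY_lepoll[OF assms] unfolding lepoll_def by blast
  define CovS where "CovS \<S> = {\<U>. \<U> \<subseteq> OpS X h \<S> \<and> essentially_finite \<U>}" for \<S>
  have good: "CovS \<S> \<in> ?T \<and> gt_Op (CovS \<S>) = OpS X h \<S>" for \<S>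
  proof -
    have sub: "OpS X h \<S> \<subseteq> Pow X" unfolding OpS_def by auto
    have e: "{} \<in> OpS X h \<S>" by (rule OpS_empty)
    have x: "X \<in> OpS X h \<S>" using himg by (rule OpS_X)
    have cl: "\<forall>U\<in>OpS X h \<S>. \<forall>V\<in>OpS X h \<S>. U \<union> V \<in> OpS X h \<S> \<and> U \<inter> V \<in> OpS X h \<S>"
    proof (intro ballI)
      fix U V assume "U \<in> OpS X h \<S>" "V \<in> OpS X h \<S>"
      then show "U \<union> V \<in> OpS X h \<S> \<and> U \<inter> V \<in> OpS X h \<S>" by (rule OpS_Un_Int)
    qed
    note sg = small_gts[OF sub e x cl, folded CovS_def]
    have wn: "weakly_normal_gt X (CovS \<S>)"
      unfolding weakly_normal_gt_def sg(1)
    proof (intro allI impI)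
      fix A1 A2 :: "'a set"
      assume a1: "(\<exists>x\<in>X. A1 = {x}) \<or> (\<exists>U\<in>OpS X h \<S>. A1 = X - U)"
        and a2: "(\<exists>x\<in>X. A2 = {x}) \<or> (\<exists>U\<in>OpS X h \<S>. A2 = X - U)"
        and d: "A1 \<inter> A2 = {}"
      have mem: "A \<in> OpS X h \<S>" if "(\<exists>x\<in>X. A = {x}) \<or> (\<exists>U\<in>OpS X h \<S>. A = X - U)" for A
        using that
      proof (elim disjE bexE)
        fix x assume "x \<in> X" "A = {x}"
        then show "A \<in> OpS X h \<S>" using OpS_single[OF inj, of x] by simp
      next
        fix U assume "U \<in> OpS X h \<S>" "A = X - U"
        then show "A \<in> OpS X h \<S>" using OpS_compl[OF _ himg, of U] by simp
      qed
      have "A1 \<in> OpS X h \<S>" using mem[OF a1] .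
      moreover have "A2 \<in> OpS X h \<S>" using mem[OF a2] .
      ultimately show "\<exists>W1\<in>OpS X h \<S>. \<exists>W2\<in>OpS X h \<S>. W1 \<inter> W2 = {} \<and> A1 \<subseteq> W1 \<and> A2 \<subseteq> W2"
        using d by (intro bexI[of _ A1] bexI[of _ A2] conjI) auto
    qed
    have dt: "induced_topology (CovS \<S>) = discrete_topology X"
      unfolding induced_topology_def sg(1)
      using sub x OpS_single[OF inj] by (intro discrete_gen) auto
    show ?thesis using sg(1,2,3) wn dt by simp
  qed
  have lower: "Pow (Pow X) \<lesssim> ?T"
    unfolding lepoll_def
  proof (intro exI[of _ CovS] conjI)
    show "CovS ` Pow (Pow X) \<subseteq> ?T"
    proof
      fix C assume "C \<in> CovS ` Pow (Pow X)"
      then obtain S where "C = CovS S" by auto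
      then show "C \<in> ?T" using good[of S] by simp
    qed
    show "inj_on CovS (Pow (Pow X))"
    proof (rule inj_onI)
      fix S1 S2 assume S1: "S1 \<in> Pow (Pow X)" and S2: "S2 \<in> Pow (Pow X)" and eq: "CovS S1 = CovS S2"
      have eqO: "OpS X h S1 = OpS X h S2" using good[of S1] good[of S2] eq by simp
      have "A \<in> S2" if "A \<in> S1" for A
      proof (rule ccontr)
        assume "A \<notin> S2"
        moreover have "A \<subseteq> X" using that S1 by auto
        ultimately have "DD X h A \<notin> OpS X h S2" using DD_notin[OF inj assms] S2 by blast
        moreover have "DD X h A \<in> OpS X h S1" using DD_in[OF inj himg that] .
        ultimately show False using eqO by simp
      qed
      moreover have "A \<in> S1" if "A \<in> S2" for A
      proof (rule ccontr)
        assume "A \<notin> S1"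
        moreover have "A \<subseteq> X" using that S2 by auto
        ultimately have "DD X h A \<notin> OpS X h S1" using DD_notin[OF inj assms] S1 by blast
        moreover have "DD X h A \<in> OpS X h S2" using DD_in[OF inj himg that] .
        ultimately show False using eqO by simp
      qed
      ultimately show "S1 = S2" by blast
    qed
  qed
  have upper: "?T \<lesssim> Pow (Pow X)"
    unfolding lepoll_def
  proof (intro exI[of _ gt_Op] conjI)
    show "inj_on gt_Op ?T"
    proof (rule inj_onI)
      fix C1 C2 assume "C1 \<in> ?T" "C2 \<in> ?T" and eq: "gt_Op C1 = gt_Op C2"
      then have "small_gt C1" "small_gt C2" by auto
      then have "C1 = {\<U>. \<U> \<subseteq> gt_Op C1 \<and> essentially_finite \<U>}"
        "C2 = {\<U>. \<U> \<subseteq> gt_Op C2 \<and> essentially_finite \<U>}" unfolding small_gt_def by auto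
      then show "C1 = C2" using eq by simp
    qed
    show "gt_Op ` ?T \<subseteq> Pow (Pow X)"
    proof
      fix Opn assume "Opn \<in> gt_Op ` ?T"
      then obtain C where "C \<in> ?T" "Opn = gt_Op C" by auto
      then have "gts X Opn C" unfolding generalized_topology_def by auto
      then show "Opn \<in> Pow (Pow X)" unfolding gts_def by auto
    qed
  qed
  show ?thesis using upper lower by (rule lepoll_antisym)
qed

end
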